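(* Let $\mathbf u$ be an infinite word whose language is closed under reversal, and suppose there exists an integer $H$ such that for every factor $f$ of $\mathbf u$ with $|f|\ge H$ the longest palindromic suffix of $f$ occurs exactly once in $f$. Let $w$ be a non-palindromic factor of $\mathbf u$ with $|w|\ge H$ and let $v$ be a palindromic factor of $\mathbf u$ with $|v|\ge H$. Then: (i) the occurrences of $w$ and $\overline w$ in $\mathbf u$ alternate, i.e., every complete return word of $w$ contains $\overline w$ as a factor; (ii) every factor $e$ of $\mathbf u$ which has prefix $w$ and suffix $\overline w$ and contains no other occurrences of $w$ or $\overline w$ is a palindrome; (iii) every complete return word of $v$ is a palindrome.
   Context: For a finite word $w$, $\overline{w}$ denotes its reversal; $w$ is a palindrome if $w=\overline w$. The language of $\mathbf u$ is closed under reversal if $\overline w$ is a factor of $\mathbf u$ whenever $w$ is (this implies every factor occurs infinitely often). A complete return word of a factor $w$ is a factor $q$ of $\mathbf u$ such that $w$ is a prefix and a suffix of $q$ and $w$ occurs in $q$ exactly twice. *)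

theory Defs
  imports Main "HOL-Library.Sublist"
begin

definition factor_of :: "(nat \<Rightarrow> 'a) \<Rightarrow> 'a list \<Rightarrow> bool" where
  "factor_of u w \<longleftrightarrow> (\<exists>i. w = map u [i..<i + length w])"

definition palindrome :: "'a list \<Rightarrow> bool" where
  "palindrome w \<longleftrightarrow> rev w = w"

definition closed_under_reversal :: "(nat \<Rightarrow> 'a) \<Rightarrow> bool" where
  "closed_under_reversal u \<longleftrightarrow> (\<forall>w. factor_of u w \<longrightarrow> factor_of u (rev w))"

definition occ :: "'a list \<Rightarrow> 'a list \<Rightarrow> nat" where
  "occ w f = card {j. j + length w \<le> length f \<and> take (length w) (drop j f) = w}"

text \<open>Longest palindromic suffix (the empty word is a palindrome, so it exists).\<close>
definition lps :: "'a list \<Rightarrow> 'a list" where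
  "lps f = drop (LEAST k. palindrome (drop k f)) f"

definition complete_return_word :: "(nat \<Rightarrow> 'a) \<Rightarrow> 'a list \<Rightarrow> 'a list \<Rightarrow> bool" where
  "complete_return_word u w q \<longleftrightarrow>
     factor_of u q \<and> prefix w q \<and> suffix w q \<and> occ w q = 2"

end

theory Submission
  imports Defs
begin

lemma occ_mono:
  assumes "P \<subseteq> {j. j + length x \<le> length f \<and> take (length x) (drop j f) = x}"
  shows "card P \<le> occ x f"
  unfolding occ_def
  by (rule card_mono[OF _ assms]) (rule finite_subset[of _ "{..length f}"], auto)

lemma occ_at: "f = a @ x @ b \<Longrightarrow> length a \<in> {j. j + length x \<le> length f \<and> take (length x) (drop j f) = x}"
  by simp

lemma occ_two:
  assumes "f = a @ x @ b" "f = c @ x @ d" "length a \<noteq> length c"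
  shows "occ x f \<ge> 2"
proof -
  have "card {length a, length c} \<le> occ x f"
    by (rule occ_mono) (use occ_at[OF assms(1)] occ_at[OF assms(2)] in auto)
  thus ?thesis using assms(3) by simp
qed

lemma occ_three:
  assumes "f = a @ x @ b" "f = c @ x @ d" "f = g @ x @ h"
    "length a \<noteq> length c" "length a \<noteq> length g" "length c \<noteq> length g"
  shows "occ x f \<ge> 3"
proof -
  have "card {length a, length c, length g} \<le> occ x f"
    by (rule occ_mono) (use occ_at[OF assms(1)] occ_at[OF assms(2)] occ_at[OF assms(3)] in auto)
  thus ?thesis using assms(4-6) by simp
qed

lemma occ_self_eq:
  assumes "prefix x q" "length q \<le> length x"
  shows "occ x q = 1"
proof -
  have q: "q = x" using assms by (metis prefix_length_le prefix_order.antisym prefix_length_prefix le_antisym prefix_order.refl)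
  have "{j. j + length x \<le> length q \<and> take (length x) (drop j q) = x} = {0}"
    using q by auto
  thus ?thesis unfolding occ_def by simp
qed

lemma lps_props:
  "palindrome (lps f) \<and> suffix (lps f) f \<and>
   (\<forall>s. suffix s f \<and> palindrome s \<longrightarrow> length s \<le> length (lps f))"
proof -
  let ?k = "LEAST k. palindrome (drop k f)"
  have ex: "palindrome (drop (length f) f)" by (simp add: palindrome_def)
  have p: "palindrome (drop ?k f)" by (rule LeastI[where P="\<lambda>k. palindrome (drop k f)", OF ex])
  have "\<forall>s. suffix s f \<and> palindrome s \<longrightarrow> length s \<le> length (drop ?k f)"
  proof (intro allI impI)
    fix s assume a: "suffix s f \<and> palindrome s"
    then obtain c where c: "f = c @ s" by (auto simp: suffix_def)
    have "drop (length c) f = s" using c by simp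
    hence "?k \<le> length c" using a by (metis Least_le)
    thus "length s \<le> length (drop ?k f)" using c by simp
  qed
  thus ?thesis using p unfolding lps_def by (auto simp: suffix_drop)
qed

lemma pal_suffix_prefix:
  assumes "palindrome p" "suffix s p" shows "prefix (rev s) p"
  using assms by (metis palindrome_def suffix_to_prefix)

theorem lemma4p4:
  fixes u :: "nat \<Rightarrow> 'a" and H :: nat and w v :: "'a list"
  assumes closed: "closed_under_reversal u"
    and H: "\<forall>f. factor_of u f \<and> length f \<ge> H \<longrightarrow> occ (lps f) f = 1"
    and w: "factor_of u w" "\<not> palindrome w" "length w \<ge> H"
    and v: "factor_of u v" "palindrome v" "length v \<ge> H"
  shows "(\<forall>q. complete_return_word u w q \<longrightarrow> sublist (rev w) q)
    \<and> (\<forall>e. factor_of u e \<and> prefix w e \<and> suffix (rev w) e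
            \<and> occ w e = 1 \<and> occ (rev w) e = 1 \<longrightarrow> palindrome e)
    \<and> (\<forall>q. complete_return_word u v q \<longrightarrow> palindrome q)"
proof (intro conjI allI impI)
  fix q assume crw: "complete_return_word u w q"
  hence fq: "factor_of u q" and pq: "prefix w q" and sq: "suffix w q" and o2: "occ w q = 2"
    by (auto simp: complete_return_word_def)
  have lq: "length q > length w"
  proof (rule ccontr)
    assume "\<not> ?thesis" hence "occ w q = 1" using occ_self_eq[OF pq] by simp
    thus False using o2 by simp
  qed
  define p where "p = lps q"
  have pp: "palindrome p" "suffix p q" and pmax: "\<And>s. suffix s q \<Longrightarrow> palindrome s \<Longrightarrow> length s \<le> length p"
    using lps_props[of q] unfolding p_def by auto
  have op: "occ p q = 1" using H fq lq w(3) unfolding p_def by auto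
  show "sublist (rev w) q"
  proof (cases "length w \<le> length p")
    case True
    hence "suffix w p" using suffix_length_suffix[OF sq pp(2)] by simp
    hence "prefix (rev w) p" using pal_suffix_prefix pp(1) by blast
    thus ?thesis using pp(2)
      by (auto simp: prefix_def suffix_def sublist_def)
  next
    case False
    hence "suffix p w" using suffix_length_suffix[OF pp(2) sq] by simp
    then obtain a where a: "w = a @ p" by (auto simp: suffix_def)
    obtain c where c: "q = w @ c" using pq by (auto simp: prefix_def)
    obtain d where d: "q = d @ p" using pp(2) by (auto simp: suffix_def)
    have "occ p q \<ge> 2"
      by (rule occ_two[of q a p c d "[]"]) (use a c d lq in auto)
    thus ?thesis using op by simp
  qed
next
  fix e assume A: "factor_of u e \<and> prefix w e \<and> suffix (rev w) e \<and> occ w e = 1 \<and> occ (rev w) e = 1"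
  hence fe: "factor_of u e" and pe: "prefix w e" and se: "suffix (rev w) e" and o1: "occ w e = 1"
    by auto
  have le: "length e \<ge> length w" using pe by (simp add: prefix_length_le)
  define p where "p = lps e"
  have pp: "palindrome p" "suffix p e" and pmax: "\<And>s. suffix s e \<Longrightarrow> palindrome s \<Longrightarrow> length s \<le> length p"
    using lps_props[of e] unfolding p_def by auto
  have op: "occ p e = 1" using H fe le w(3) unfolding p_def by auto
  show "palindrome e"
  proof (cases "p = e")
    case True thus ?thesis using pp by simp
  next
    case ne: False
    obtain d where d: "e = d @ p" using pp(2) by (auto simp: suffix_def)
    have dne: "d \<noteq> []" using d ne by auto
    obtain c where c: "e = w @ c" using pe by (auto simp: prefix_def)
    show ?thesis
    proof (cases "length w \<le> length p")
      case True
      hence "suffix (rev w) p" using suffix_length_suffix[OF se pp(2)] by simp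
      hence "prefix w p" using pal_suffix_prefix[OF pp(1)] by fastforce
      then obtain b where b: "p = w @ b" by (auto simp: prefix_def)
      have "occ w e \<ge> 2"
        by (rule occ_two[of e "[]" w c d b]) (use b c d dne in auto)
      thus ?thesis using o1 by simp
    next
      case False
      hence "suffix p (rev w)" using suffix_length_suffix[OF pp(2) se] by simp
      hence "prefix p w" using pal_suffix_prefix[OF pp(1)] pp(1)
        by (metis palindrome_def rev_rev_ident suffix_to_prefix)
      then obtain b where b: "w = p @ b" by (auto simp: prefix_def)
      have "occ p e \<ge> 2"
        by (rule occ_two[of e "[]" p "b @ c" d "[]"]) (use b c d dne in auto)
      thus ?thesis using op by simp
    qed
  qed
next
  fix q assume crw: "complete_return_word u v q"
  hence fq: "factor_of u q" and pq: "prefix v q" and sq: "suffix v q" and o2: "occ v q = 2"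
    by (auto simp: complete_return_word_def)
  have lq: "length q > length v"
  proof (rule ccontr)
    assume "\<not> ?thesis" hence "occ v q = 1" using occ_self_eq[OF pq] by simp
    thus False using o2 by simp
  qed
  define p where "p = lps q"
  have pp: "palindrome p" "suffix p q" and pmax: "\<And>s. suffix s q \<Longrightarrow> palindrome s \<Longrightarrow> length s \<le> length p"
    using lps_props[of q] unfolding p_def by auto
  have op: "occ p q = 1" using H fq lq v(3) unfolding p_def by auto
  have lvp: "length v \<le> length p" using pmax[OF sq v(2)] .
  show "palindrome q"
  proof (cases "p = q")
    case True thus ?thesis using pp by simp
  next
    case ne: False
    obtain d where d: "q = d @ p" using pp(2) by (auto simp: suffix_def)
    have dne: "d \<noteq> []" using d ne by auto
    obtain c where c: "q = v @ c" using pq by (auto simp: prefix_def)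
    obtain g where g: "q = g @ v" using sq by (auto simp: suffix_def)
    have "suffix v p" using suffix_length_suffix[OF sq pp(2) lvp] .
    hence "prefix v p" using pal_suffix_prefix[OF pp(1)] v(2) by (metis palindrome_def)
    then obtain b where b: "p = v @ b" by (auto simp: prefix_def)
    show ?thesis
    proof (cases "length p = length v")
      case True
      hence "p = v" using b by simp
      thus ?thesis using op o2 by simp
    next
      case False
      have "length d \<noteq> length g"
      proof -
        have "length q = length d + length p" "length q = length g + length v"
          using arg_cong[OF d, of length] arg_cong[OF g, of length] by simp_all
        thus ?thesis using False by simp
      qed
      have "occ v q \<ge> 3"
        by (rule occ_three[of q "[]" v c d b g "[]"]) (use b c d g dne lq \<open>length d \<noteq> length g\<close> in auto)
      thus ?thesis using o2 by simp
    qed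
  qed
qed

end
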